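(* Let $a_1\in\mathbb C$, $a_2\in\mathbb R$, $\theta\in[0,2\pi)$ with $2|a_1|+|a_2|<\frac{1}{4(1+\varepsilon)^3}$, and $f(\zeta)=\big(e^{i\theta}\zeta,\ e^{2i\theta}\zeta(a_1+a_2\zeta+\overline{a_1}\zeta^2)\big)$. Then $f$ (restricted to $\overline\Delta$) is a stationary disc for the hypersurface $\partial\Omega\cap\{\rho=0\}$, i.e. $f(\partial\Delta)\subset\{\rho=0\}$ and there is a continuous function $c:\partial\Delta\to\mathbb R\setminus\{0\}$ such that $\zeta\mapsto\zeta c(\zeta)\partial\rho(f(\zeta))$ extends holomorphically to $\Delta$ (continuously up to $\partial\Delta$).
   Context: $\Delta$ denotes the unit disc in $\mathbb C$ and $\Delta_r$ the disc of radius $r$ centered at $0$. Fix $0<\varepsilon<\frac{1}{100}$. Let $\rho(z,w)=|z|^2+|w|^2-\operatorname{Re}(\bar z^4w^2)-1$ on $\mathbb C^2$, $\partial\rho=(\partial\rho/\partial z,\partial\rho/\partial w)$, and $\Omega=\{\rho<0\}\cap\big(\Delta_{1+\varepsilon}\times\Delta_{\frac{1}{4(1+\varepsilon)^3}}\big)$. *)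

theory Defs
  imports "HOL-Analysis.Analysis"
begin

definition rho :: "complex \<Rightarrow> complex \<Rightarrow> real" where
  "rho z w = (cmod z)^2 + (cmod w)^2 - Re ((cnj z)^4 * w^2) - 1"

definition wirt_z :: "(complex \<Rightarrow> complex \<Rightarrow> real) \<Rightarrow> complex \<Rightarrow> complex \<Rightarrow> complex" where
  "wirt_z F z w =
     (complex_of_real (deriv (\<lambda>t::real. F (z + complex_of_real t) w) 0)
      - \<i> * complex_of_real (deriv (\<lambda>t::real. F (z + \<i> * complex_of_real t) w) 0)) / 2"

definition wirt_w :: "(complex \<Rightarrow> complex \<Rightarrow> real) \<Rightarrow> complex \<Rightarrow> complex \<Rightarrow> complex" where
  "wirt_w F z w =
     (complex_of_real (deriv (\<lambda>t::real. F z (w + complex_of_real t)) 0)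
      - \<i> * complex_of_real (deriv (\<lambda>t::real. F z (w + \<i> * complex_of_real t)) 0)) / 2"

definition Omega :: "real \<Rightarrow> (complex \<times> complex) set" where
  "Omega eps = {(z, w). rho z w < 0 \<and> cmod z < 1 + eps \<and> cmod w < 1 / (4 * (1 + eps)^3)}"

end

theory Submission
  imports Defs
begin
lemma rho_alt: "rho z w = Re (z * cnj z + w * cnj w - (cnj z ^ 4 * w^2 + z^4 * cnj w^2) / 2) - 1"
proof -
  define c where "c = cnj z ^ 4 * w^2"
  define P where "P = (cnj z ^ 4 * w^2 + z^4 * cnj w^2) / 2"
  have "z^4 * cnj w^2 = cnj c" by (simp add: c_def)
  then have Pe: "P = (c + cnj c) / 2" by (simp add: P_def c_def)
  have "Re ((c + cnj c) / 2) = Re c" by simp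
  then have RP: "Re P = Re c" unfolding Pe .
  have "Re (z * cnj z + w * cnj w - P) - 1 = Re (z * cnj z) + Re (w * cnj w) - Re P - 1" by simp
  also have "\<dots> = rho z w" unfolding RP rho_def c_def by (simp add: complex_mult_cnj cmod_power2)
  finally show ?thesis by (simp add: P_def)
qed

lemma gen: assumes "\<And>t::real. F t = Re (H (of_real t)) - 1"
  and "(H has_field_derivative D) (at 0)"
  shows "deriv F 0 = Re D"
proof -
  have "((\<lambda>t. Re (H (of_real t)) - 1) has_real_derivative Re D) (at 0)"
    using assms(2) by (auto intro!: derivative_eq_intros has_vector_derivative_real_field)
  moreover have "F = (\<lambda>t. Re (H (of_real t)) - 1)" using assms(1) by auto
  ultimately show ?thesis by (simp add: DERIV_imp_deriv)
qed

lemma fin: "(complex_of_real (Re (X + cnj X)) - \<i> * complex_of_real (Re (\<i> * (X - cnj X)))) / 2 = X"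
  by (simp add: complex_eq_iff)

lemma wz: "wirt_z rho z w = cnj z - 2 * z^3 * cnj w ^ 2"
proof -
  define X where "X = cnj z - 2 * z^3 * cnj w ^ 2"
  have a: "deriv (\<lambda>t::real. rho (z + of_real t) w) 0 = Re (X + cnj X)"
    apply (rule gen[where H="\<lambda>s. (z+s)*(cnj z+s) + w*cnj w - ((cnj z+s)^4*w^2 + (z+s)^4*cnj w^2)/2"])
    apply (simp add: rho_alt)
    by (auto intro!: derivative_eq_intros simp: X_def field_simps)
  have b: "deriv (\<lambda>t::real. rho (z + \<i> * of_real t) w) 0 = Re (\<i> * (X - cnj X))"
    apply (rule gen[where H="\<lambda>s. (z+\<i> * s)*(cnj z-\<i> * s) + w*cnj w - ((cnj z-\<i> * s)^4*w^2 + (z+\<i> * s)^4*cnj w^2)/2"])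
    apply (simp add: rho_alt)
    by (auto intro!: derivative_eq_intros simp: X_def field_simps)
  show ?thesis unfolding wirt_z_def a b fin X_def ..
qed

lemma ww: "wirt_w rho z w = cnj w - cnj z^4 * w"
proof -
  define X where "X = cnj w - cnj z^4 * w"
  have a: "deriv (\<lambda>t::real. rho z (w + of_real t)) 0 = Re (X + cnj X)"
    apply (rule gen[where H="\<lambda>s. z * cnj z + (w+s)*(cnj w+s) - (cnj z^4*(w+s)^2 + z^4*(cnj w+s)^2)/2"])
    apply (simp add: rho_alt)
    by (auto intro!: derivative_eq_intros simp: X_def field_simps)
  have b: "deriv (\<lambda>t::real. rho z (w + \<i> * of_real t)) 0 = Re (\<i> * (X - cnj X))"
    apply (rule gen[where H="\<lambda>s. z*cnj z + (w+\<i> * s)*(cnj w-\<i> * s) - (cnj z^4*(w+\<i> * s)^2 + z^4*(cnj w-\<i> * s)^2)/2"])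
    apply (simp add: rho_alt)
    by (auto intro!: derivative_eq_intros simp: X_def field_simps)
  show ?thesis unfolding wirt_w_def a b fin X_def ..
qed

lemma rho_alt2: "rho z w = Re (z * cnj z + w * cnj w - cnj z ^ 4 * w^2) - 1"
proof -
  have "Re (z * cnj z + w * cnj w - cnj z ^ 4 * w^2) = Re (z * cnj z) + Re (w * cnj w) - Re (cnj z ^ 4 * w^2)"
    by simp
  then show ?thesis unfolding rho_def by (simp add: complex_mult_cnj cmod_power2)
qed

lemma key:
  fixes e \<zeta> :: complex and q :: real
  assumes "cmod e = 1" "cmod \<zeta> = 1"
  shows "(e*\<zeta>) * cnj (e*\<zeta>) + (e^2*\<zeta>^2*q) * cnj (e^2*\<zeta>^2*q) - cnj (e*\<zeta>)^4 * (e^2*\<zeta>^2*q)^2 = 1"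
    and "cnj (e*\<zeta>) - 2 * (e*\<zeta>)^3 * cnj (e^2*\<zeta>^2*q)^2 = cnj e * cnj \<zeta> * (1 - 2 * (complex_of_real q)^2)"
    and "cnj (e^2*\<zeta>^2*q) - cnj (e*\<zeta>)^4 * (e^2*\<zeta>^2*q) = 0"
proof -
  have h1: "cnj e * e = 1" using assms(1) by (simp add: mult.commute complex_mult_cnj cmod_power2[symmetric])
  have h2: "cnj \<zeta> * \<zeta> = 1" using assms(2) by (simp add: mult.commute complex_mult_cnj cmod_power2[symmetric])
  show "(e*\<zeta>) * cnj (e*\<zeta>) + (e^2*\<zeta>^2*q) * cnj (e^2*\<zeta>^2*q) - cnj (e*\<zeta>)^4 * (e^2*\<zeta>^2*q)^2 = 1"
    unfolding complex_cnj_mult complex_cnj_power complex_cnj_complex_of_real using h1 h2 by algebra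
  show "cnj (e*\<zeta>) - 2 * (e*\<zeta>)^3 * cnj (e^2*\<zeta>^2*q)^2 = cnj e * cnj \<zeta> * (1 - 2 * (complex_of_real q)^2)"
    unfolding complex_cnj_mult complex_cnj_power complex_cnj_complex_of_real using h1 h2 by algebra
  show "cnj (e^2*\<zeta>^2*q) - cnj (e*\<zeta>)^4 * (e^2*\<zeta>^2*q) = 0"
    unfolding complex_cnj_mult complex_cnj_power complex_cnj_complex_of_real using h1 h2 by algebra
qed

lemma pq:
  assumes "cmod \<zeta> = 1"
  shows "a1 + of_real a2 * \<zeta> + cnj a1 * \<zeta>^2 = \<zeta> * of_real (2 * Re (a1 * cnj \<zeta>) + a2)"
proof -
  have zz: "\<zeta> * cnj \<zeta> = 1" using assms by (simp add: complex_mult_cnj cmod_power2[symmetric])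
  have "complex_of_real (2 * Re (a1 * cnj \<zeta>)) = a1 * cnj \<zeta> + cnj (a1 * cnj \<zeta>)"
    by (rule complex_add_cnj[symmetric])
  then have "\<zeta> * of_real (2 * Re (a1 * cnj \<zeta>) + a2) = a1 * (\<zeta> * cnj \<zeta>) + cnj a1 * \<zeta>^2 + of_real a2 * \<zeta>"
    by (simp add: algebra_simps power2_eq_square)
  then show ?thesis using zz by simp
qed

lemma rho_scale: "rho (complex_of_real t * z) w = t^2 * cmod z^2 + cmod w^2 - t^4 * Re (cnj z^4 * w^2) - 1"
  unfolding rho_def by (simp add: norm_mult power_mult_distrib mult.assoc)

lemma aux: fixes D ce \<zeta> :: complex assumes "D \<noteq> 0" "\<zeta> * cnj \<zeta> = 1"
  shows "ce = \<zeta> * (1 / D) * (ce * cnj \<zeta> * D)"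
proof -
  have "\<zeta> * (1 / D) * (ce * cnj \<zeta> * D) = ce * (\<zeta> * cnj \<zeta>) * (D * (1 / D))" by (simp only: ac_simps)
  also have "\<dots> = ce" using assms by simp
  finally show ?thesis by simp
qed

theorem mainTheorem10:
  fixes eps :: real and a1 :: complex and a2 :: real and \<theta> :: real
    and f :: "complex \<Rightarrow> complex \<times> complex"
  assumes "0 < eps" "eps < 1 / 100"
    and "0 \<le> \<theta>" "\<theta> < 2 * pi"
    and "2 * cmod a1 + \<bar>a2\<bar> < 1 / (4 * (1 + eps)^3)"
    and "\<And>\<zeta>::complex. f \<zeta> = (exp (\<i> * \<theta>) * \<zeta>,
                   exp (2 * \<i> * \<theta>) * \<zeta> * (a1 + a2 * \<zeta> + cnj a1 * \<zeta>^2))"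
  shows "(\<forall>\<zeta>\<in>sphere 0 1. f \<zeta> \<in> frontier (Omega eps) \<and> rho (fst (f \<zeta>)) (snd (f \<zeta>)) = 0) \<and>
         (\<exists>c :: complex \<Rightarrow> real. continuous_on (sphere 0 1) c \<and> (\<forall>\<zeta>\<in>sphere 0 1. c \<zeta> \<noteq> 0) \<and>
            (\<exists>g1 g2 :: complex \<Rightarrow> complex.
               g1 holomorphic_on ball 0 1 \<and> g2 holomorphic_on ball 0 1 \<and>
               continuous_on (cball 0 1) g1 \<and> continuous_on (cball 0 1) g2 \<and>
               (\<forall>\<zeta>\<in>sphere 0 1.
                  g1 \<zeta> = \<zeta> * complex_of_real (c \<zeta>) * wirt_z rho (fst (f \<zeta>)) (snd (f \<zeta>)) \<and>
                  g2 \<zeta> = \<zeta> * complex_of_real (c \<zeta>) * wirt_w rho (fst (f \<zeta>)) (snd (f \<zeta>)))))"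
proof -
  define e where "e = exp (\<i> * complex_of_real \<theta>)"
  have e1: "cmod e = 1" unfolding e_def by simp
  have e2: "exp (2 * \<i> * complex_of_real \<theta>) = e^2"
    unfolding e_def using exp_double[of "\<i> * complex_of_real \<theta>"] by (simp add: mult.assoc)
  define B where "B = 1 / (4 * (1 + eps)^3)"
  have "1 \<le> (1 + eps)^3" using assms(1) by (simp add: one_le_power)
  then have B4: "B \<le> 1/4" unfolding B_def using assms(1) by (simp add: divide_simps)
  define q where "q = (\<lambda>\<zeta>. 2 * Re (a1 * cnj \<zeta>) + a2)"
  have qb: "\<bar>q \<zeta>\<bar> < B" if "cmod \<zeta> = 1" for \<zeta>
  proof -
    have "\<bar>Re (a1 * cnj \<zeta>)\<bar> \<le> cmod (a1 * cnj \<zeta>)" by (rule abs_Re_le_cmod)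
    also have "\<dots> = cmod a1" using that by (simp add: norm_mult)
    finally have "\<bar>q \<zeta>\<bar> \<le> 2 * cmod a1 + \<bar>a2\<bar>" unfolding q_def by linarith
    then show ?thesis using assms(5) unfolding B_def by linarith
  qed
  have qs: "(q \<zeta>)^2 < 1/16" if "cmod \<zeta> = 1" for \<zeta>
  proof -
    have "\<bar>q \<zeta>\<bar> < 1/4" using qb[OF that] B4 by linarith
    then have "\<bar>q \<zeta>\<bar>^2 < (1/4)^2" by (intro power_strict_mono) auto
    then show ?thesis by (simp add: power2_eq_square)
  qed
  have fz: "f \<zeta> = (e*\<zeta>, e^2*\<zeta>^2*complex_of_real (q \<zeta>))" if "cmod \<zeta> = 1" for \<zeta>
    using assms(6)[of \<zeta>] pq[OF that, of a1 a2] unfolding e2 e_def[symmetric] q_def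
    by (simp add: power2_eq_square mult.assoc)
  have sph: "cmod \<zeta> = 1" if "\<zeta> \<in> sphere 0 1" for \<zeta> using that by simp
  have rho0: "rho (e*\<zeta>) (e^2*\<zeta>^2*complex_of_real (q \<zeta>)) = 0" if "cmod \<zeta> = 1" for \<zeta>
    unfolding rho_alt2 key(1)[OF e1 that] by simp
  have part1: "f \<zeta> \<in> frontier (Omega eps) \<and> rho (fst (f \<zeta>)) (snd (f \<zeta>)) = 0" if "cmod \<zeta> = 1" for \<zeta>
  proof -
    define z where "z = e*\<zeta>"
    define w where "w = e^2*\<zeta>^2*complex_of_real (q \<zeta>)"
    have f: "f \<zeta> = (z, w)" using fz[OF that] z_def w_def by simp
    have r0: "rho z w = 0" using rho0[OF that] z_def w_def by simp
    have nz: "cmod z = 1" using e1 that by (simp add: z_def norm_mult)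
    have nw: "cmod w = \<bar>q \<zeta>\<bar>" using e1 that by (simp add: w_def norm_mult norm_power)
    have rd: "rho z w = cmod z^2 + cmod w^2 - Re (cnj z^4 * w^2) - 1" unfolding rho_def ..
    have nz2: "cmod z^2 = 1" using nz by simp
    have nw2: "cmod w^2 = (q \<zeta>)^2" using nw by (simp add: power2_abs)
    have R: "Re (cnj z^4 * w^2) = (q \<zeta>)^2" using r0 rd nz2 nw2 by linarith
    have nO: "(z, w) \<notin> Omega eps" using r0 by (simp add: Omega_def)
    have notin: "(z, w) \<notin> interior (Omega eps)" using nO interior_subset[of "Omega eps"] by blast
    define t where "t = (\<lambda>n::nat. 1 - inverse (real (Suc n)) / 2)"
    have tl0: "t \<longlonglongrightarrow> 1 - 0 / 2" unfolding t_def
      by (intro tendsto_intros LIMSEQ_inverse_real_of_nat) simp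
    then have tl: "t \<longlonglongrightarrow> 1" by simp
    have tb: "1/2 \<le> t n \<and> t n < 1" for n
    proof -
      have "0 < inverse (real (Suc n))" "inverse (real (Suc n)) \<le> 1" by (auto simp: field_simps)
      then show ?thesis unfolding t_def by linarith
    qed
    have inO: "(complex_of_real (t n) * z, w) \<in> Omega eps" for n
    proof -
      have t1: "t n ^ 2 < 1" using tb[of n] by (simp add: abs_square_less_1)
      have "(q \<zeta>)^2 * (1 + t n ^ 2) \<le> (q \<zeta>)^2 * 2"
        by (rule mult_left_mono) (use t1 in auto)
      then have t2: "(q \<zeta>)^2 * (1 + t n ^ 2) < 1" using qs[OF that] by linarith
      have "rho (complex_of_real (t n) * z) w = (t n ^ 2 - 1) * (1 - (q \<zeta>)^2 * (1 + t n ^ 2))"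
        unfolding rho_scale nz nw R by (simp add: algebra_simps power2_eq_square power4_eq_xxxx)
      also have "\<dots> < 0" using t1 t2 by (intro mult_neg_pos) auto
      finally have "rho (complex_of_real (t n) * z) w < 0" .
      moreover have "cmod (complex_of_real (t n) * z) < 1 + eps"
        using tb[of n] nz assms(1) by (simp add: norm_mult)
      moreover have "cmod w < 1 / (4 * (1 + eps)^3)" using nw qb[OF that] B_def by simp
      ultimately show ?thesis unfolding Omega_def by simp
    qed
    have l1: "(\<lambda>n. complex_of_real (t n) * z) \<longlonglongrightarrow> complex_of_real 1 * z"
      by (intro tendsto_intros tl)
    then have l2: "(\<lambda>n. complex_of_real (t n) * z) \<longlonglongrightarrow> z" by simp
    have lim: "(\<lambda>n. (complex_of_real (t n) * z, w)) \<longlonglongrightarrow> (z, w)"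
      by (intro tendsto_Pair l2 tendsto_const)
    have "(z, w) \<in> closure (Omega eps)"
      unfolding closure_sequential
      by (rule exI[of _ "\<lambda>n. (complex_of_real (t n) * z, w)"]) (use inO lim in auto)
    then show ?thesis using notin r0 unfolding frontier_def f by simp
  qed
  define c where "c = (\<lambda>\<zeta>. 1 / (1 - 2 * (q \<zeta>)^2))"
  have den: "1 - 2 * (q \<zeta>)^2 > 0" if "cmod \<zeta> = 1" for \<zeta> using qs[OF that] by linarith
  have cq: "continuous_on (sphere 0 1) q" unfolding q_def by (intro continuous_intros)
  have cc: "continuous_on (sphere 0 1) c"
    unfolding c_def by (intro continuous_intros cq) (use den sph in force)
  have cn: "\<forall>\<zeta>\<in>sphere 0 1. c \<zeta> \<noteq> 0" unfolding c_def using den sph by fastforce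
  have id: "cnj e = \<zeta> * complex_of_real (c \<zeta>) * wirt_z rho (fst (f \<zeta>)) (snd (f \<zeta>)) \<and>
            0 = \<zeta> * complex_of_real (c \<zeta>) * wirt_w rho (fst (f \<zeta>)) (snd (f \<zeta>))" if "cmod \<zeta> = 1" for \<zeta>
  proof -
    have D: "(1 - 2 * (complex_of_real (q \<zeta>))^2) \<noteq> 0"
    proof -
      have "1 - 2 * (q \<zeta>)^2 \<noteq> 0" using den[OF that] by linarith
      then have "complex_of_real (1 - 2 * (q \<zeta>)^2) \<noteq> 0" by (simp only: of_real_eq_0_iff) simp
      moreover have "complex_of_real (1 - 2 * (q \<zeta>)^2) = 1 - 2 * (complex_of_real (q \<zeta>))^2" by simp
      ultimately show ?thesis by metis
    qed
    have cD: "complex_of_real (c \<zeta>) = 1 / (1 - 2 * (complex_of_real (q \<zeta>))^2)" unfolding c_def by simp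
    have zz: "\<zeta> * cnj \<zeta> = 1" using that by (simp add: complex_mult_cnj cmod_power2[symmetric])
    show ?thesis unfolding fz[OF that] fst_conv snd_conv wz ww key(2)[OF e1 that] key(3)[OF e1 that] cD
      using aux[OF D zz] by simp
  qed
  have P1: "\<forall>\<zeta>\<in>sphere 0 1. f \<zeta> \<in> frontier (Omega eps) \<and> rho (fst (f \<zeta>)) (snd (f \<zeta>)) = 0"
    using part1 sph by blast
  have P2: "\<forall>\<zeta>\<in>sphere 0 1. cnj e = \<zeta> * complex_of_real (c \<zeta>) * wirt_z rho (fst (f \<zeta>)) (snd (f \<zeta>)) \<and>
            0 = \<zeta> * complex_of_real (c \<zeta>) * wirt_w rho (fst (f \<zeta>)) (snd (f \<zeta>))"
    using id sph by blast
  have H1: "(\<lambda>_. cnj e) holomorphic_on ball 0 1" by (rule holomorphic_on_const)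
  have H2: "(\<lambda>_. 0::complex) holomorphic_on ball 0 1" by (rule holomorphic_on_const)
  have C1: "continuous_on (cball 0 1) (\<lambda>_. cnj e)" by (rule continuous_on_const)
  have C2: "continuous_on (cball 0 1) (\<lambda>_. 0::complex)" by (rule continuous_on_const)
  show ?thesis
    apply (rule conjI[OF P1])
    apply (rule exI[of _ c])
    apply (intro conjI cc cn)
    apply (rule exI[of _ "\<lambda>_. cnj e"], rule exI[of _ "\<lambda>_. 0"])
    using H1 H2 C1 C2 P2 by simp
qed
end
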